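(* Let $X$ be a regular space. Then $L(X)\leq t(Q_{P}(X))$.
   Context: A function $f\colon X\to Y$ between topological spaces is quasi-continuous at $x\in X$ if for every open $U\ni x$ and every open $V\ni f(x)$ there is a non-empty open $G\subseteq U$ with $f(G)\subseteq V$; $f$ is quasi-continuous if it is so at every point. $Q_{P}(X)$ is the set of quasi-continuous functions $X\to\mathbb{R}$ with the topology of point-wise convergence (subspace topology from $\mathbb{R}^X$). The Lindelöf degree is $L(X)=\aleph_0+\min\{\eta : \text{every open cover of } X \text{ has a subcover of cardinality}\le\eta\}$. The tightness of a space $Z$ is $t(Z)=\sup_{z\in Z} t(z,Z)$, where $t(z,Z)=\aleph_0+\sup\{a(z,A): A\subseteq Z,\ z\in\overline{A}\}$ and $a(z,A)=\min\{|B|: B\subseteq A,\ z\in\overline{B}\}$. *)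

theory Defs
  imports "HOL-Analysis.Analysis" "HOL-Library.Equipollence"
begin

definition quasi_continuous_at :: "'a topology \<Rightarrow> ('a \<Rightarrow> real) \<Rightarrow> 'a \<Rightarrow> bool" where
  "quasi_continuous_at X f x \<longleftrightarrow>
     (\<forall>U V. openin X U \<longrightarrow> x \<in> U \<longrightarrow> open V \<longrightarrow> f x \<in> V \<longrightarrow>
        (\<exists>G. openin X G \<and> G \<noteq> {} \<and> G \<subseteq> U \<and> f ` G \<subseteq> V))"

definition quasi_continuous :: "'a topology \<Rightarrow> ('a \<Rightarrow> real) \<Rightarrow> bool" where
  "quasi_continuous X f \<longleftrightarrow> (\<forall>x\<in>topspace X. quasi_continuous_at X f x)"

text \<open>Q_P(X): quasi-continuous real functions on X (represented extensionally on topspace X)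
  with the topology of pointwise convergence (subspace of the product topology).\<close>
definition QP :: "'a topology \<Rightarrow> ('a \<Rightarrow> real) topology" where
  "QP X = subtopology (powertop_real (topspace X))
            {f \<in> extensional (topspace X). quasi_continuous X f}"

text \<open>L(X) \<le> |K|  (L(X) includes the summand aleph_0).\<close>
definition lindelof_degree_le :: "'a topology \<Rightarrow> 'k set \<Rightarrow> bool" where
  "lindelof_degree_le X K \<longleftrightarrow> infinite K \<and>
     (\<forall>\<U>. (\<forall>U\<in>\<U>. openin X U) \<longrightarrow> topspace X \<subseteq> \<Union>\<U> \<longrightarrow>
        (\<exists>\<V>. \<V> \<subseteq> \<U> \<and> topspace X \<subseteq> \<Union>\<V> \<and> \<V> \<lesssim> K))"

text \<open>t(Z) \<le> |K|  (t(Z) includes the summand aleph_0).\<close>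
definition tightness_le :: "'b topology \<Rightarrow> 'k set \<Rightarrow> bool" where
  "tightness_le Z K \<longleftrightarrow> infinite K \<and>
     (\<forall>z A. A \<subseteq> topspace Z \<longrightarrow> z \<in> Z closure_of A \<longrightarrow>
        (\<exists>B. B \<subseteq> A \<and> z \<in> Z closure_of B \<and> B \<lesssim> K))"

end

theory Submission
  imports Defs
begin

lemma UN_finite_lepoll:
  assumes "B \<lesssim> K" "infinite K" "\<And>b. b \<in> B \<Longrightarrow> finite (S b)"
  shows "(\<Union>b\<in>B. S b) \<lesssim> K"
proof -
  have 1: "ordLeq3 (card_of B) (card_of K)" using assms(1) unfolding lepoll_def
    by (simp add: card_of_ordLeq[symmetric])
  have 2: "\<forall>b\<in>B. ordLeq3 (card_of (S b)) (card_of K)"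
  proof
    fix b assume "b \<in> B"
    then have "S b \<lesssim> K" using assms(2,3) finite_lepoll_infinite by blast
    then show "ordLeq3 (card_of (S b)) (card_of K)" unfolding lepoll_def
      by (simp add: card_of_ordLeq[symmetric])
  qed
  have "ordLeq3 (card_of (\<Union>b\<in>B. S b)) (card_of K)"
    by (rule card_of_UNION_ordLeq_infinite[OF assms(2) 1 2])
  then show ?thesis unfolding lepoll_def by (simp add: card_of_ordLeq[symmetric])
qed

lemma qc_indicator_closure:
  assumes "openin X W"
  shows "quasi_continuous X (restrict (\<lambda>x. if x \<in> X closure_of W then 1 else 0::real) (topspace X))"
  unfolding quasi_continuous_def quasi_continuous_at_def
proof (intro ballI allI impI)
  fix x U V
  assume x: "x \<in> topspace X" and U: "openin X U" "x \<in> U" and V: "open V"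
    and fx: "restrict (\<lambda>x. if x \<in> X closure_of W then 1 else 0::real) (topspace X) x \<in> V"
  show "\<exists>G. openin X G \<and> G \<noteq> {} \<and> G \<subseteq> U \<and>
      restrict (\<lambda>x. if x \<in> X closure_of W then 1 else 0::real) (topspace X) ` G \<subseteq> V"
  proof (cases "x \<in> X closure_of W")
    case True
    then obtain y where y: "y \<in> W" "y \<in> U" using U in_closure_of by metis
    have Wsub: "W \<subseteq> X closure_of W" using assms closure_of_subset openin_subset by metis
    have G: "openin X (U \<inter> W)" "U \<inter> W \<noteq> {}" "U \<inter> W \<subseteq> U" using U assms y by auto
    have "U \<inter> W \<subseteq> topspace X" using openin_subset[OF assms] by blast
    then have "restrict (\<lambda>x. if x \<in> X closure_of W then 1 else 0::real) (topspace X) ` (U \<inter> W) \<subseteq> V"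
      using Wsub fx True x by auto
    then show ?thesis using G by blast
  next
    case False
    have G: "openin X (U - X closure_of W)" using U by auto
    have G2: "x \<in> U - X closure_of W" using U False by blast
    have "U - X closure_of W \<subseteq> topspace X" using openin_subset[OF U(1)] by blast
    then have "restrict (\<lambda>x. if x \<in> X closure_of W then 1 else 0::real) (topspace X) ` (U - X closure_of W) \<subseteq> V"
      using fx False x by auto
    then show ?thesis using G G2 by blast
  qed
qed

lemma qc_const:
  "quasi_continuous X (restrict (\<lambda>x. c::real) (topspace X))"
  unfolding quasi_continuous_def quasi_continuous_at_def
proof (intro ballI allI impI)
  fix x U V
  assume x: "x \<in> topspace X" and U: "openin X U" "x \<in> U" and V: "open V"
    and fx: "restrict (\<lambda>x. c::real) (topspace X) x \<in> V"
  have "restrict (\<lambda>x. c::real) (topspace X) ` U \<subseteq> V"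
    using openin_subset[OF U(1)] fx x by auto
  then show "\<exists>G. openin X G \<and> G \<noteq> {} \<and> G \<subseteq> U \<and> restrict (\<lambda>x. c::real) (topspace X) ` G \<subseteq> V"
    using U by blast
qed

theorem mainTheorem2:
  fixes X :: "'a topology" and K :: "'k set"
  assumes "regular_space X"
    and "tightness_le (QP X) K"
  shows "lindelof_degree_le X K"
proof -
  define T where "T = topspace X"
  have infK: "infinite K" using assms(2) unfolding tightness_le_def by blast
  show ?thesis unfolding lindelof_degree_le_def
  proof (intro conjI infK allI impI)
    fix \<U> assume opU: "\<forall>U\<in>\<U>. openin X U" and cov: "topspace X \<subseteq> \<Union>\<U>"
    define \<V> where "\<V> = {V. openin X V \<and> (\<exists>U\<in>\<U>. X closure_of V \<subseteq> U)}"
    define ind where "ind = (\<lambda>C. restrict (\<lambda>x. if x \<in> C then 1 else 0::real) T)"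
    define A where "A = (\<lambda>\<S>. ind (X closure_of \<Union>\<S>)) ` {\<S>. finite \<S> \<and> \<S> \<subseteq> \<V>}"
    define z where "z = restrict (\<lambda>x. 1::real) T"
    have Vcov: "\<exists>V\<in>\<V>. x \<in> V" if xT: "x \<in> T" for x
    proof -
      obtain U where U: "U \<in> \<U>" "x \<in> U" using cov xT T_def by blast
      have "closedin X (T - U)" using opU U T_def by auto
      then obtain V where V: "openin X V" "x \<in> V" "disjnt (T - U) (X closure_of V)"
        using assms(1) xT U unfolding regular_space T_def by blast
      have "X closure_of V \<subseteq> U" using V(3) closure_of_subset_topspace[of X V] T_def
        by (auto simp: disjnt_iff)
      then show ?thesis using V U \<V>_def by blast
    qed
    have topQ: "topspace (QP X) = {f \<in> extensional T. quasi_continuous X f} \<inter> (\<Pi>\<^sub>E i\<in>T. UNIV)"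
      unfolding QP_def T_def by auto
    have AQ: "A \<subseteq> topspace (QP X)"
    proof
      fix f assume "f \<in> A"
      then obtain \<S> where S: "finite \<S>" "\<S> \<subseteq> \<V>" "f = ind (X closure_of \<Union>\<S>)"
        unfolding A_def by blast
      have "openin X (\<Union>\<S>)" using S \<V>_def by auto
      then have "quasi_continuous X f" using qc_indicator_closure S(3) ind_def T_def by simp
      then show "f \<in> topspace (QP X)" unfolding topQ S(3) ind_def by auto
    qed
    have zQ: "z \<in> topspace (QP X)" unfolding topQ z_def using qc_const T_def by auto
    have zA: "z \<in> (QP X) closure_of A"
      unfolding in_closure_of
    proof (intro conjI zQ allI impI)
      fix N assume N: "z \<in> N \<and> openin (QP X) N"
      then obtain Op where Op: "openin (powertop_real T) Op" "N = Op \<inter> {f \<in> extensional T. quasi_continuous X f}"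
        unfolding QP_def T_def openin_subtopology by blast
      then obtain W where W: "finite {i \<in> T. W i \<noteq> UNIV}" "\<forall>i\<in>T. open (W i)"
         "z \<in> Pi\<^sub>E T W" "Pi\<^sub>E T W \<subseteq> Op"
        using N unfolding openin_product_topology_alt by fastforce
      define F where "F = {i \<in> T. W i \<noteq> UNIV}"
      have "\<forall>x\<in>F. \<exists>V. V \<in> \<V> \<and> x \<in> V" using Vcov F_def by blast
      then obtain g where g: "\<And>x. x \<in> F \<Longrightarrow> g x \<in> \<V> \<and> x \<in> g x" by metis
      define \<S> where "\<S> = g ` F"
      have S: "finite \<S>" "\<S> \<subseteq> \<V>" using W(1) g F_def \<S>_def by auto
      define f where "f = ind (X closure_of \<Union>\<S>)"
      have fA: "f \<in> A" unfolding A_def f_def using S by blast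
      have "F \<subseteq> X closure_of \<Union>\<S>"
      proof
        fix x assume x: "x \<in> F"
        then have "x \<in> \<Union>\<S>" using g \<S>_def by blast
        moreover have "x \<in> T" using x F_def by auto
        ultimately show "x \<in> X closure_of \<Union>\<S>" using closure_of_subset T_def
          by (metis in_closure_of openin_subset[of X] UnionE)
      qed
      then have "f \<in> Pi\<^sub>E T W"
        using W(3) unfolding f_def ind_def z_def F_def by (auto simp: PiE_iff)
      then have "f \<in> N" using W(4) Op(2) AQ fA topQ by auto
      then show "\<exists>y. y \<in> A \<and> y \<in> N" using fA by blast
    qed
    obtain B where B: "B \<subseteq> A" "z \<in> (QP X) closure_of B" "B \<lesssim> K"
      using assms(2) AQ zA unfolding tightness_le_def by blast
    have "\<forall>b\<in>B. \<exists>\<S>. finite \<S> \<and> \<S> \<subseteq> \<V> \<and> b = ind (X closure_of \<Union>\<S>)"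
      using B(1) unfolding A_def by blast
    then obtain S where S: "\<And>b. b \<in> B \<Longrightarrow> finite (S b) \<and> S b \<subseteq> \<V> \<and> b = ind (X closure_of \<Union>(S b))"
      by metis
    have Sfin: "finite (S b)" if "b \<in> B" for b by (rule conjunct1[OF S[OF that]])
    have Ssub: "S b \<subseteq> \<V>" if "b \<in> B" for b by (rule conjunct1[OF conjunct2[OF S[OF that]]])
    have Seq: "b = ind (X closure_of \<Union>(S b))" if "b \<in> B" for b by (rule conjunct2[OF conjunct2[OF S[OF that]]])
    have "\<forall>V\<in>\<V>. \<exists>U. U \<in> \<U> \<and> X closure_of V \<subseteq> U" unfolding \<V>_def by blast
    then obtain u where u: "\<And>V. V \<in> \<V> \<Longrightarrow> u V \<in> \<U> \<and> X closure_of V \<subseteq> u V" by metis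
    define \<W> where "\<W> = u ` (\<Union>b\<in>B. S b)"
    show "\<exists>\<V>. \<V> \<subseteq> \<U> \<and> topspace X \<subseteq> \<Union>\<V> \<and> \<V> \<lesssim> K"
    proof (intro exI conjI)
      show "\<W> \<subseteq> \<U>" unfolding \<W>_def using u Ssub by blast
      show "\<W> \<lesssim> K" unfolding \<W>_def
        using image_lepoll UN_finite_lepoll[OF B(3) infK] Sfin lepoll_trans by metis
      show "topspace X \<subseteq> \<Union>\<W>"
      proof
        fix x assume x: "x \<in> topspace X"
        define N where "N = {f \<in> topspace (QP X). f x \<in> {1/2<..}}"
        have "openin (QP X) N" unfolding N_def QP_def
          apply (rule openin_continuous_map_preimage[where Y=euclideanreal])
           apply (rule continuous_map_from_subtopology)
           apply (rule continuous_map_product_projection)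
          using x by auto
        moreover have "z \<in> N" using zQ x unfolding N_def z_def T_def by auto
        ultimately obtain b where b: "b \<in> B" "b \<in> N" using B(2) in_closure_of by metis
        then have bx: "b x > 1/2" unfolding N_def by auto
        obtain C where C: "C = X closure_of \<Union>(S b)" by blast
        have beq0: "b = ind (X closure_of \<Union>(S b))" by (rule Seq[OF b(1)])
        have beq: "b = ind C" unfolding C by (rule beq0)
        have xT: "x \<in> T" using x T_def by simp
        have "ind C x > 1/2" using bx unfolding beq .
        then have "x \<in> C" using xT unfolding ind_def
          by (cases "x \<in> C") auto
        then have "x \<in> X closure_of \<Union>(S b)" using C by simp
        then obtain V where V: "V \<in> S b" "x \<in> X closure_of V"
          using closure_of_Union Sfin b(1) by blast
        then have "x \<in> u V" "V \<in> \<V>" using u Ssub b by blast+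
        then show "x \<in> \<Union>\<W>" using V b unfolding \<W>_def by blast
      qed
    qed
  qed
qed

end
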